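(* Let $N\ge3$ and let $M$ be the $N$-dimensional Riemannian model with pole $o$ and metric $ds^2=dr^2+\psi^2(r)d\omega^2$, where $d\omega^2$ is the round metric on $\mathbb{S}^{N-1}$ and $\psi$ is a $C^\infty$ nonnegative function on $[0,\infty)$, strictly positive on $(0,\infty)$, with $\psi(0)=\psi''(0)=0$, $\psi'(0)=1$. Set $K^{rad}_{\pi,r}=-\frac{\psi''(r)}{\psi(r)}$ and $H^{tan}_{\pi,r}=-\frac{\psi'(r)^2-1}{\psi(r)^2}$. Then for all $u\in C_c^\infty(M)$, $$\int_M|\nabla_gu|^2dv_g+\frac{(N-1)}{4}\int_M\left[2K^{rad}_{\pi,r}+(N-3)H^{tan}_{\pi,r}\right]u^2dv_g\ge\frac14\int_M\frac{u^2}{r^2}dv_g+\frac{(N-1)(N-3)}{4}\int_M\frac{u^2}{\psi^2}dv_g.$$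
   Context: $r$ is the geodesic distance from the pole $o$; $\nabla_g$, $dv_g$ are the Riemannian gradient and volume of $M$. $K^{rad}_{\pi,r}$ and $H^{tan}_{\pi,r}$ are the sectional curvatures of planes containing, respectively orthogonal to, the radial direction. *)

theory Defs
  imports "HOL-Analysis.Analysis"
begin

fun iter_dd :: "('a::real_normed_vector \<Rightarrow> real) \<Rightarrow> 'a list \<Rightarrow> 'a \<Rightarrow> real" where
  "iter_dd u [] = u"
| "iter_dd u (v # vs) = (\<lambda>x. frechet_derivative (iter_dd u vs) (at x) v)"

definition smooth_fun :: "('a::real_normed_vector \<Rightarrow> real) \<Rightarrow> bool" where
  "smooth_fun u \<longleftrightarrow> (\<forall>vs x. iter_dd u vs differentiable (at x))"

definition test_fun :: "('a::real_normed_vector \<Rightarrow> real) \<Rightarrow> bool" where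
  "test_fun u \<longleftrightarrow> smooth_fun u \<and> compact (closure {x. u x \<noteq> 0})"

text \<open>The model manifold M is realised in global geodesic polar (normal) coordinates
  about the pole o = 0: a point x of real^'n has r = norm x and angular part x / r,
  and the metric is dr^2 + psi(r)^2 d omega^2.\<close>

definition eucl_grad :: "(real ^ 'n \<Rightarrow> real) \<Rightarrow> real ^ 'n \<Rightarrow> real ^ 'n" where
  "eucl_grad u x = (\<chi> i. frechet_derivative u (at x) (axis i 1))"

definition radial_deriv :: "(real ^ 'n \<Rightarrow> real) \<Rightarrow> real ^ 'n \<Rightarrow> real" where
  "radial_deriv u x = frechet_derivative u (at x) (x /\<^sub>R norm x)"

text \<open>|grad_g u|^2 = (du/dr)^2 + psi(r)^(-2) |grad_omega u|^2, where the round-sphere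
  gradient satisfies |grad_omega u|^2 = r^2 (|grad u|^2 - (du/dr)^2).\<close>
definition model_grad_sq :: "(real \<Rightarrow> real) \<Rightarrow> (real ^ 'n \<Rightarrow> real) \<Rightarrow> real ^ 'n \<Rightarrow> real" where
  "model_grad_sq \<psi> u x =
     (radial_deriv u x)\<^sup>2
     + (norm x / \<psi> (norm x))\<^sup>2 * ((norm (eucl_grad u x))\<^sup>2 - (radial_deriv u x)\<^sup>2)"

text \<open>Riemannian volume density dv_g = (psi(r)/r)^(N-1) dx, N = CARD('n).\<close>
definition model_density :: "(real \<Rightarrow> real) \<Rightarrow> real ^ 'n \<Rightarrow> real" where
  "model_density \<psi> x = (\<psi> (norm x) / norm x) ^ (CARD('n) - 1)"

definition model_integral :: "(real \<Rightarrow> real) \<Rightarrow> (real ^ 'n \<Rightarrow> real) \<Rightarrow> real" where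
  "model_integral \<psi> f = (\<integral>x. f x * model_density \<psi> x \<partial>lborel)"

definition K_rad :: "(real \<Rightarrow> real) \<Rightarrow> real \<Rightarrow> real" where
  "K_rad \<psi> r = - deriv (deriv \<psi>) r / \<psi> r"

definition H_tan :: "(real \<Rightarrow> real) \<Rightarrow> real \<Rightarrow> real" where
  "H_tan \<psi> r = - ((deriv \<psi> r)\<^sup>2 - 1) / (\<psi> r)\<^sup>2"

end

theory Submission
  imports Defs
begin

lemma fd_real: fixes f :: "real \<Rightarrow> real"
  assumes "f differentiable (at x)" shows "frechet_derivative f (at x) 1 = deriv f x"
proof -
  have "(f has_derivative frechet_derivative f (at x)) (at x)" using assms frechet_derivative_works by blast
  moreover have "(f has_field_derivative deriv f x) (at x)" using assms
    by (simp add: DERIV_deriv_iff_real_differentiable)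
  hence "(f has_derivative (\<lambda>h. deriv f x * h)) (at x)" by (simp add: has_field_derivative_def)
  ultimately have "frechet_derivative f (at x) = (\<lambda>h. deriv f x * h)" by (rule has_derivative_unique)
  thus ?thesis by simp
qed

lemma psi_facts:
  fixes \<psi> :: "real \<Rightarrow> real"
  assumes "smooth_fun \<psi>"
  shows "\<And>x. (\<psi> has_real_derivative deriv \<psi> x) (at x)"
    and "\<And>x. (deriv \<psi> has_real_derivative deriv (deriv \<psi>) x) (at x)"
    and "continuous_on UNIV (deriv (deriv \<psi>))"
proof -
  have sm: "\<And>vs x. iter_dd \<psi> vs differentiable (at x)" using assms by (simp add: smooth_fun_def)
  have d0: "\<And>x. \<psi> differentiable (at x)" using sm[of "[]"] by simp
  have e1: "iter_dd \<psi> [1] = deriv \<psi>" using fd_real[OF d0] by (auto simp: fun_eq_iff)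
  have d1: "\<And>x. deriv \<psi> differentiable (at x)" using sm[of "[1]"] e1 by simp
  have e2: "iter_dd \<psi> [1,1] = deriv (deriv \<psi>)" using fd_real[OF d1] e1 by (auto simp: fun_eq_iff)
  have d2: "\<And>x. deriv (deriv \<psi>) differentiable (at x)" using sm[of "[1,1]"] e2 by simp
  show "\<And>x. (\<psi> has_real_derivative deriv \<psi> x) (at x)" using d0 DERIV_deriv_iff_real_differentiable by blast
  show "\<And>x. (deriv \<psi> has_real_derivative deriv (deriv \<psi>) x) (at x)" using d1 DERIV_deriv_iff_real_differentiable by blast
  show "continuous_on UNIV (deriv (deriv \<psi>))"
    using d2 by (simp add: continuous_at_imp_continuous_on differentiable_imp_continuous_within)
qed

definition gi :: "(real ^ 'n \<Rightarrow> real) \<Rightarrow> 'n \<Rightarrow> real ^ 'n \<Rightarrow> real" where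
  "gi u i y = frechet_derivative u (at y) (axis i 1)"

lemma u_facts:
  fixes u :: "real ^ 'n \<Rightarrow> real"
  assumes "smooth_fun u"
  shows "\<And>y. (u has_derivative frechet_derivative u (at y)) (at y)"
    and "\<And>i. continuous_on UNIV (gi u i)"
    and "\<And>y v. frechet_derivative u (at y) v = (\<Sum>i\<in>UNIV. v $ i * gi u i y)"
    and "continuous_on UNIV u"
proof -
  have sm: "\<And>vs x. iter_dd u vs differentiable (at x)" using assms by (simp add: smooth_fun_def)
  have d0: "\<And>x. u differentiable (at x)" using sm[of "[]"] by simp
  show hd: "\<And>y. (u has_derivative frechet_derivative u (at y)) (at y)" using d0 frechet_derivative_works by blast
  show "continuous_on UNIV u" using d0 by (simp add: continuous_at_imp_continuous_on differentiable_imp_continuous_within)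
  show "\<And>i. continuous_on UNIV (gi u i)"
  proof -
    fix i
    have "gi u i = iter_dd u [axis i 1]" by (simp add: gi_def fun_eq_iff)
    thus "continuous_on UNIV (gi u i)" using sm[of "[axis i 1]"]
      by (simp add: continuous_at_imp_continuous_on differentiable_imp_continuous_within)
  qed
  fix y v
  have lin: "linear (frechet_derivative u (at y))" using hd[of y] has_derivative_linear by blast
  have "frechet_derivative u (at y) v = frechet_derivative u (at y) (\<Sum>i\<in>UNIV. v $ i *\<^sub>R axis i 1)"
    using basis_expansion[of v] by (simp add: scalar_mult_eq_scaleR)
  also have "\<dots> = (\<Sum>i\<in>UNIV. v $ i * gi u i y)"
    using lin by (simp add: linear_sum linear_scale gi_def)
  finally show "frechet_derivative u (at y) v = (\<Sum>i\<in>UNIV. v $ i * gi u i y)" .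
qed

lemma eucl_grad_gi: "eucl_grad u y = (\<chi> i. gi u i y)"
  by (simp add: eucl_grad_def gi_def)

lemma radial_inner:
  assumes "smooth_fun u"
  shows "radial_deriv u y = inner (y /\<^sub>R norm y) (eucl_grad u y)"
  using u_facts(3)[OF assms] by (simp add: radial_deriv_def inner_vec_def eucl_grad_gi)


lemma scale_int:
  fixes f :: "'a::euclidean_space \<Rightarrow> real"
  assumes f[measurable]: "f \<in> borel_measurable borel" and c: "c > 0"
  shows "integrable lborel (\<lambda>x. f (c *\<^sub>R x)) \<longleftrightarrow> integrable lborel f"
    and "(\<integral>x. f x \<partial>lborel) = c ^ DIM('a) * (\<integral>x. f (c *\<^sub>R x) \<partial>lborel)"
proof -
  have L: "(lborel::'a measure) = density (distr lborel borel (\<lambda>x::'a. c *\<^sub>R x)) (\<lambda>_. ennreal (c ^ DIM('a)))"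
    using lborel_affine[where t="0::'a" and c=c] c by simp
  have m: "(\<lambda>x::'a. c *\<^sub>R x) \<in> measurable lborel borel" by simp
  have "integrable lborel f \<longleftrightarrow> integrable (density (distr lborel borel (\<lambda>x. c *\<^sub>R x)) (\<lambda>_. ennreal (c ^ DIM('a)))) f"
    by (simp only: L[symmetric])
  also have "\<dots> \<longleftrightarrow> integrable (distr lborel borel (\<lambda>x. c *\<^sub>R x)) (\<lambda>x. c ^ DIM('a) *\<^sub>R f x)"
    using c by (intro integrable_density) auto
  also have "\<dots> \<longleftrightarrow> integrable lborel (\<lambda>x. c ^ DIM('a) *\<^sub>R f (c *\<^sub>R x))"
    by (rule integrable_distr_eq) auto
  also have "\<dots> \<longleftrightarrow> integrable lborel (\<lambda>x. f (c *\<^sub>R x))"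
    using c by simp
  finally show "integrable lborel (\<lambda>x. f (c *\<^sub>R x)) \<longleftrightarrow> integrable lborel f" by simp
  have "(\<integral>x. f x \<partial>lborel) = integral\<^sup>L (density (distr lborel borel (\<lambda>x. c *\<^sub>R x)) (\<lambda>_. ennreal (c ^ DIM('a)))) f"
    by (simp only: L[symmetric])
  also have "\<dots> = integral\<^sup>L (distr lborel borel (\<lambda>x. c *\<^sub>R x)) (\<lambda>x. c ^ DIM('a) *\<^sub>R f x)"
    using c by (intro integral_density) auto
  also have "\<dots> = (\<integral>x. c ^ DIM('a) *\<^sub>R f (c *\<^sub>R x) \<partial>lborel)"
    by (rule integral_distr) auto
  also have "\<dots> = c ^ DIM('a) * (\<integral>x. f (c *\<^sub>R x) \<partial>lborel)"
    by simp
  finally show "(\<integral>x. f x \<partial>lborel) = c ^ DIM('a) * (\<integral>x. f (c *\<^sub>R x) \<partial>lborel)" .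
qed

lemma dyadic_shell:
  fixes R r :: real assumes "0 < r" "r < R"
  obtains k :: nat where "R / 2 ^ (k+1) \<le> r" "r < R / 2 ^ k"
proof -
  have "\<exists>n::nat. (1/2) ^ n < r / R" using assms by (intro real_arch_pow_inv) auto
  then obtain n :: nat where "(1/2)^n < r / R" by blast
  hence ex: "\<exists>n::nat. R / 2 ^ n \<le> r" using assms by (intro exI[of _ n]) (auto simp: field_simps power_divide)
  define n0 where "n0 = (LEAST n::nat. R / 2 ^ n \<le> r)"
  have n0: "R / 2 ^ n0 \<le> r" unfolding n0_def by (rule LeastI_ex[OF ex])
  have "n0 \<noteq> 0"
  proof
    assume "n0 = 0" with n0 assms show False by simp
  qed
  then obtain k where k: "n0 = Suc k" by (cases n0) auto
  have "\<not> R / 2 ^ k \<le> r" using not_less_Least[of k "\<lambda>n. R / 2 ^ n \<le> r"] k unfolding n0_def by auto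
  thus ?thesis using that[of k] n0 k by auto
qed

lemma W_integrable:
  fixes R :: real
  assumes R: "R > 0" and D: "DIM('a::euclidean_space) \<ge> 3"
  shows "integrable lborel (\<lambda>y::'a. indicator (ball 0 R) y / norm y ^ 2)"
proof -
  define D where "D = DIM('a)"
  define V where "V = measure lborel (ball (0::'a) 1)"
  have V: "V \<ge> 0" unfolding V_def by simp
  define a where "a = (\<lambda>k::nat. 4 ^ (k+1) / R^2 * ((R / 2^k) ^ D * V))"
  have a_eq: "a k = 4 * R ^ D / R^2 * V * (4 / 2 ^ D) ^ k" for k
    unfolding a_def by (simp add: field_simps power_divide power_mult_distrib power_mult[symmetric] mult.commute)
  have q: "4 / 2 ^ D \<le> (1/2::real)"
  proof -
    have "(2::real) ^ 3 \<le> 2 ^ D" using D unfolding D_def by (intro power_increasing) auto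
    thus ?thesis by (simp add: field_simps)
  qed
  have q0: "0 \<le> 4 / (2::real) ^ D" by simp
  have summ: "summable a"
    unfolding a_eq by (intro summable_mult summable_geometric) (use q q0 in auto)
  have a0: "0 \<le> a k" for k unfolding a_def using R V by auto
  have pw: "ennreal (norm (indicator (ball 0 R) y / norm y ^ 2)) \<le>
      (\<Sum>k. ennreal (4 ^ (k+1) / R^2) * indicator (ball (0::'a) (R / 2^k)) y)" for y
  proof (cases "y \<in> ball 0 R \<and> y \<noteq> 0")
    case True
    then obtain k where k1: "R / 2 ^ (k+1) \<le> norm y" and k2: "norm y < R / 2 ^ k"
      using dyadic_shell[of "norm y" R] by auto
    have pos: "0 < R / 2 ^ (k+1)" using R by simp
    have h4: "(2::real)^(k*2) = 4^k" by (subst mult.commute) (simp add: power_mult)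
    have "(R / 2 ^ (k+1))^2 \<le> (norm y)^2" using k1 pos by (intro power_mono) auto
    hence "1 / norm y ^ 2 \<le> 1 / (R / 2 ^ (k+1))^2" using pos True by (intro divide_left_mono mult_pos_pos zero_less_power) auto
    also have "\<dots> = 4 ^ (k+1) / R^2" using h4 by (simp add: power_divide power_mult_distrib field_simps power_mult[symmetric] mult.commute)
    finally have b: "1 / norm y ^ 2 \<le> 4 ^ (k+1) / R^2" .
    have "ennreal (norm (indicator (ball 0 R) y / norm y ^ 2)) = ennreal (1 / norm y ^ 2)"
      using True by simp
    also have "\<dots> \<le> ennreal (4 ^ (k+1) / R^2) * indicator (ball (0::'a) (R / 2^k)) y"
      using b k2 by (simp add: ennreal_leI)
    also have "\<dots> \<le> (\<Sum>k. ennreal (4 ^ (k+1) / R^2) * indicator (ball (0::'a) (R / 2^k)) y)"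
    proof -
      define F where "F = (\<lambda>k. ennreal (4 ^ (k+1) / R^2) * indicator (ball (0::'a) (R / 2^k)) y)"
      have "F k \<le> suminf F" using sum_le_suminf[of F "{k}"] by (simp add: summableI)
      thus ?thesis unfolding F_def .
    qed
    finally show ?thesis .
  next
    case False
    thus ?thesis by (auto simp: indicator_def)
  qed
  have "(\<integral>\<^sup>+y. ennreal (norm (indicator (ball (0::'a) R) y / norm y ^ 2)) \<partial>lborel) \<le>
      (\<integral>\<^sup>+y. (\<Sum>k. ennreal (4 ^ (k+1) / R^2) * indicator (ball (0::'a) (R / 2^k)) y) \<partial>lborel)"
    by (rule nn_integral_mono) (rule pw)
  also have "\<dots> = (\<Sum>k. \<integral>\<^sup>+y. ennreal (4 ^ (k+1) / R^2) * indicator (ball (0::'a) (R / 2^k)) y \<partial>lborel)"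
    by (intro nn_integral_suminf borel_measurable_times_ennreal borel_measurable_indicator) auto
  also have "\<dots> = (\<Sum>k. ennreal (a k))"
  proof (intro suminf_cong)
    fix k
    have "(\<integral>\<^sup>+y. ennreal (4 ^ (k+1) / R^2) * indicator (ball (0::'a) (R / 2^k)) y \<partial>lborel)
        = ennreal (4 ^ (k+1) / R^2) * emeasure lborel (ball (0::'a) (R / 2^k))"
      by (simp add: nn_integral_cmult_indicator)
    also have "emeasure lborel (ball (0::'a) (R / 2^k)) = ennreal (measure lborel (ball (0::'a) (R / 2^k)))"
      using emeasure_lborel_ball_finite[of "0::'a" "R/2^k"] emeasure_eq_ennreal_measure infinity_ennreal_def
      by (metis less_irrefl)
    also have "measure lborel (ball (0::'a) (R / 2^k)) = (R / 2^k) ^ D * V"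
      unfolding V_def D_def using R by (intro content_ball_conv_unit_ball) auto
    finally have eq1: "(\<integral>\<^sup>+y. ennreal (4 ^ (k+1) / R^2) * indicator (ball (0::'a) (R / 2^k)) y \<partial>lborel) = ennreal (4 ^ (k+1) / R^2) * ennreal ((R / 2^k) ^ D * V)" .
    have "ennreal (4 ^ (k+1) / R^2) * ennreal ((R / 2^k) ^ D * V) = ennreal (4 ^ (k+1) / R^2 * ((R / 2^k) ^ D * V))"
      using R V by (intro ennreal_mult[symmetric]) auto
    thus "(\<integral>\<^sup>+y. ennreal (4 ^ (k+1) / R^2) * indicator (ball (0::'a) (R / 2^k)) y \<partial>lborel) = ennreal (a k)"
      using eq1 unfolding a_def by simp
  qed
  also have "\<dots> < \<infinity>"
    using ennreal_suminf_neq_top[OF summ a0] by (simp add: less_top)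
  finally show ?thesis
    by (intro integrableI_bounded) (auto intro!: borel_measurable_divide borel_measurable_indicator)
qed


locale hardy =
  fixes \<psi> :: "real \<Rightarrow> real" and u :: "real ^ 'n \<Rightarrow> real"
  assumes N3: "CARD('n) \<ge> 3"
    and psi_smooth: "smooth_fun \<psi>"
    and psi_pos: "\<And>r. r > 0 \<Longrightarrow> \<psi> r > 0"
    and psi0: "\<psi> 0 = 0" and dpsi0: "deriv \<psi> 0 = 1"
    and u_test: "test_fun u"
begin

lemma u_smooth: "smooth_fun u" using u_test by (simp add: test_fun_def)

lemmas psiD = psi_facts[OF psi_smooth]
lemmas uD = u_facts[OF u_smooth]

lemma cont_psi: "continuous_on UNIV \<psi>"
  using psiD(1) by (meson DERIV_isCont continuous_at_imp_continuous_on)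
lemma cont_dpsi: "continuous_on UNIV (deriv \<psi>)"
  using psiD(2) by (meson DERIV_isCont continuous_at_imp_continuous_on)
lemmas cont_ddpsi = psiD(3)

lemma cont_grad: "continuous_on UNIV (eucl_grad u)"
proof -
  have "eucl_grad u = (\<lambda>y. \<chi> i. gi u i y)" by (simp add: fun_eq_iff eucl_grad_gi)
  thus ?thesis using uD(2) by (simp add: continuous_on_vec_lambda)
qed

lemma support_exists:
  obtains R where "R > 0" "\<And>y. norm y \<ge> R \<Longrightarrow> u y = 0 \<and> eucl_grad u y = 0"
proof -
  have "compact (closure {x. u x \<noteq> 0})" using u_test by (simp add: test_fun_def)
  hence "bounded (closure {x. u x \<noteq> 0})" by (rule compact_imp_bounded)
  then obtain B where B0: "\<forall>y\<in>closure {x. u x \<noteq> 0}. norm y \<le> B" unfolding bounded_iff by blast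
  have B: "norm y \<le> B" if "y \<in> closure {x. u x \<noteq> 0}" for y using B0 that by blast
  define R where "R = \<bar>B\<bar> + 1"
  have "R > 0" unfolding R_def by simp
  moreover have "u y = 0 \<and> eucl_grad u y = 0" if y: "norm y \<ge> R" for y
  proof -
    define Op where "Op = {z::real^'n. \<bar>B\<bar> < norm z}"
    have oO: "open Op" unfolding Op_def by (intro open_Collect_less continuous_intros)
    have yO: "y \<in> Op" using y unfolding Op_def R_def by simp
    have z0: "u z = 0" if "z \<in> Op" for z
    proof (rule ccontr)
      assume "u z \<noteq> 0"
      hence "z \<in> closure {x. u x \<noteq> 0}" by (intro subsetD[OF closure_subset]) simp
      hence "norm z \<le> B" by (rule B)
      thus False using that unfolding Op_def by simp
    qed
    have "((\<lambda>z. 0) has_derivative (\<lambda>h. 0)) (at y)" by (rule has_derivative_const)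
    hence "(u has_derivative (\<lambda>h. 0)) (at y)"
      by (rule has_derivative_transform_within_open[OF _ oO yO]) (use z0 in auto)
    hence fd: "frechet_derivative u (at y) = (\<lambda>h. 0)"
      by (rule has_derivative_unique[OF uD(1)[of y]])
    show ?thesis using z0[OF yO] fd by (simp add: eucl_grad_def vec_eq_iff)
  qed
  ultimately show ?thesis by (rule that)
qed

lemma bound_compact_supp:
  fixes f :: "real ^ 'n \<Rightarrow> 'b::real_normed_vector"
  assumes "continuous_on UNIV f" "\<And>y. norm y \<ge> R \<Longrightarrow> f y = 0"
  obtains M where "\<And>y. norm (f y) \<le> M"
proof -
  have "compact (f ` cball 0 R)"
    by (intro compact_continuous_image continuous_on_subset[OF assms(1)]) auto
  then obtain M where M: "\<And>z. z \<in> f ` cball 0 R \<Longrightarrow> norm z \<le> M"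
    using compact_imp_bounded bounded_iff by metis
  have "norm (f y) \<le> max M 0" for y
  proof (cases "norm y \<le> R")
    case True thus ?thesis using M[of "f y"] by (auto simp: dist_norm)
  next
    case False thus ?thesis using assms(2)[of y] by simp
  qed
  thus ?thesis using that by blast
qed

lemma psi_bounds_exist:
  assumes R: "R > 0"
  obtains c C where "c > 0" "\<And>s. 0 < s \<Longrightarrow> s \<le> R \<Longrightarrow>
     c * s \<le> \<psi> s \<and> \<psi> s \<le> C * s \<and> \<bar>deriv \<psi> s\<bar> \<le> C \<and> \<bar>deriv (deriv \<psi>) s\<bar> \<le> C"
proof -
  have "compact (deriv \<psi> ` {0..R})"
    by (intro compact_continuous_image continuous_on_subset[OF cont_dpsi]) auto
  hence "bounded (deriv \<psi> ` {0..R})" by (rule compact_imp_bounded)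
  then obtain C1 where C10: "\<forall>x\<in>deriv \<psi> ` {0..R}. norm x \<le> C1" unfolding bounded_iff by blast
  have C1: "\<bar>deriv \<psi> s\<bar> \<le> C1" if "s \<in> {0..R}" for s using C10 that by auto
  have "compact (deriv (deriv \<psi>) ` {0..R})"
    by (intro compact_continuous_image continuous_on_subset[OF cont_ddpsi]) auto
  hence "bounded (deriv (deriv \<psi>) ` {0..R})" by (rule compact_imp_bounded)
  then obtain C2 where C20: "\<forall>x\<in>deriv (deriv \<psi>) ` {0..R}. norm x \<le> C2" unfolding bounded_iff by blast
  have C2: "\<bar>deriv (deriv \<psi>) s\<bar> \<le> C2" if "s \<in> {0..R}" for s using C20 that by auto
  have up: "\<psi> s \<le> C1 * s" if sR: "0 < s" "s \<le> R" for s
  proof -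
    obtain z where z: "0 < z" "z < s" "\<psi> s - \<psi> 0 = (s - 0) * deriv \<psi> z"
    proof -
      have "\<exists>z>0. z < s \<and> \<psi> s - \<psi> 0 = (s - 0) * deriv \<psi> z"
        by (rule MVT2) (use sR psiD(1) in auto)
      thus ?thesis using that by blast
    qed
    have "deriv \<psi> z \<le> C1" using C1[of z] z sR by auto
    thus ?thesis using z psi0 sR by (simp add: mult.commute mult_left_mono)
  qed
  have "isCont (deriv \<psi>) 0" using cont_dpsi by (simp add: continuous_on_eq_continuous_at)
  hence "\<forall>e>0. \<exists>d>0. \<forall>s. dist s 0 < d \<longrightarrow> dist (deriv \<psi> s) (deriv \<psi> 0) < e"
    unfolding continuous_at_eps_delta .
  hence "\<exists>d>0. \<forall>s. dist s 0 < d \<longrightarrow> dist (deriv \<psi> s) (deriv \<psi> 0) < 1/2"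
    by (drule_tac spec[of _ "1/2"]) simp
  then obtain \<delta> where \<delta>: "\<delta> > 0" "\<And>s. \<bar>s - 0\<bar> < \<delta> \<Longrightarrow> \<bar>deriv \<psi> s - deriv \<psi> 0\<bar> < 1/2"
    unfolding dist_real_def by blast
  define d where "d = \<delta> / 2"
  have d: "d > 0" "d < \<delta>" using \<delta> unfolding d_def by auto
  have low1: "s / 2 \<le> \<psi> s" if sR: "0 < s" "s \<le> d" for s
  proof -
    obtain z where z: "0 < z" "z < s" "\<psi> s - \<psi> 0 = (s - 0) * deriv \<psi> z"
    proof -
      have "\<exists>z>0. z < s \<and> \<psi> s - \<psi> 0 = (s - 0) * deriv \<psi> z"
        by (rule MVT2) (use sR psiD(1) in auto)
      thus ?thesis using that by blast
    qed
    have "\<bar>deriv \<psi> z - deriv \<psi> 0\<bar> < 1/2" using \<delta>(2)[of z] z sR d by auto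
    hence "deriv \<psi> z \<ge> 1/2" using dpsi0 by linarith
    hence "s * (1/2) \<le> s * deriv \<psi> z" using sR by (intro mult_left_mono) auto
    thus ?thesis using z psi0 by simp
  qed
  obtain c2 where c2: "c2 > 0" "\<And>s. d \<le> s \<Longrightarrow> s \<le> R \<Longrightarrow> c2 * s \<le> \<psi> s"
  proof (cases "d \<le> R")
    case True
    have "\<exists>x\<in>{d..R}. \<forall>y\<in>{d..R}. \<psi> x \<le> \<psi> y"
      by (intro continuous_attains_inf continuous_on_subset[OF cont_psi]) (use True in auto)
    then obtain x0 where x0: "x0 \<in> {d..R}" "\<And>y. y \<in> {d..R} \<Longrightarrow> \<psi> x0 \<le> \<psi> y" by blast
    have m: "\<psi> x0 > 0" using psi_pos[of x0] x0 d by auto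
    show ?thesis
    proof (rule that[of "\<psi> x0 / R"])
      show "\<psi> x0 / R > 0" using m R by simp
      fix s assume s: "d \<le> s" "s \<le> R"
      have "\<psi> x0 / R * s \<le> \<psi> x0" using m R s by (simp add: field_simps mult_left_mono)
      also have "\<dots> \<le> \<psi> s" using x0(2)[of s] s by auto
      finally show "\<psi> x0 / R * s \<le> \<psi> s" .
    qed
  next
    case False
    show ?thesis by (rule that[of 1]) (use False in auto)
  qed
  define c where "c = min (1/2) c2"
  define C where "C = max C1 C2"
  show ?thesis
  proof (rule that[of c C])
    show "c > 0" using c2 unfolding c_def by simp
    fix s assume s: "0 < s" "s \<le> R"
    have "c * s \<le> \<psi> s"
    proof (cases "s \<le> d")
      case True
      have "c * s \<le> s / 2" using s unfolding c_def by (simp add: mult_right_mono)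
      thus ?thesis using low1[OF s(1) True] by linarith
    next
      case False
      have "c * s \<le> c2 * s" using s unfolding c_def by (simp add: mult_right_mono)
      thus ?thesis using c2(2)[of s] False s by linarith
    qed
    moreover have "\<psi> s \<le> C * s"
    proof -
      have "C1 * s \<le> C * s" using s by (intro mult_right_mono) (auto simp: C_def)
      thus ?thesis using up[OF s] by linarith
    qed
    moreover have "\<bar>deriv \<psi> s\<bar> \<le> C" using C1[of s] s unfolding C_def by auto
    moreover have "\<bar>deriv (deriv \<psi>) s\<bar> \<le> C" using C2[of s] s unfolding C_def by auto
    ultimately show "c * s \<le> \<psi> s \<and> \<psi> s \<le> C * s \<and> \<bar>deriv \<psi> s\<bar> \<le> C \<and> \<bar>deriv (deriv \<psi>) s\<bar> \<le> C"
      by blast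
  qed
qed

end

definition Pk :: "real \<Rightarrow> nat \<Rightarrow> ('a::real_normed_vector \<Rightarrow> real) \<Rightarrow> bool" where
  "Pk R k f \<longleftrightarrow> (\<exists>C. \<forall>y. 0 < norm y \<and> norm y < R \<longrightarrow> \<bar>f y\<bar> \<le> C / norm y ^ k)"

lemma PkI: "(\<And>y. 0 < norm y \<Longrightarrow> norm y < R \<Longrightarrow> \<bar>f y\<bar> \<le> C / norm y ^ k) \<Longrightarrow> Pk R k f"
  unfolding Pk_def by blast

lemma PkE: assumes "Pk R k f"
  obtains C where "C \<ge> 0" "\<And>y. 0 < norm y \<Longrightarrow> norm y < R \<Longrightarrow> \<bar>f y\<bar> \<le> C / norm y ^ k"
proof -
  obtain C where C: "\<And>y. 0 < norm y \<Longrightarrow> norm y < R \<Longrightarrow> \<bar>f y\<bar> \<le> C / norm y ^ k"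
    using assms unfolding Pk_def by blast
  have "\<bar>f y\<bar> \<le> \<bar>C\<bar> / norm y ^ k" if "0 < norm y" "norm y < R" for y
    using C[OF that] that by (smt (verit) divide_right_mono zero_le_power)
  thus ?thesis using that[of "\<bar>C\<bar>"] by auto
qed

lemma Pk_cong: "(\<And>y. 0 < norm y \<Longrightarrow> norm y < R \<Longrightarrow> f y = g y) \<Longrightarrow> Pk R k g \<Longrightarrow> Pk R k f"
  unfolding Pk_def by metis

lemma Pk_bdd: "(\<And>y. 0 < norm y \<Longrightarrow> norm y < R \<Longrightarrow> \<bar>f y\<bar> \<le> B) \<Longrightarrow> Pk R 0 f"
  by (rule PkI[where C=B]) auto

lemma Pk_const: "Pk R 0 (\<lambda>y. a)"
  by (rule Pk_bdd[where B="\<bar>a\<bar>"]) auto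

lemma Pk_add: assumes "Pk R k f" "Pk R k g" shows "Pk R k (\<lambda>y. f y + g y)"
proof -
  obtain C1 where C1: "\<And>y. 0 < norm y \<Longrightarrow> norm y < R \<Longrightarrow> \<bar>f y\<bar> \<le> C1 / norm y ^ k" using PkE[OF assms(1)] by blast
  obtain C2 where C2: "\<And>y. 0 < norm y \<Longrightarrow> norm y < R \<Longrightarrow> \<bar>g y\<bar> \<le> C2 / norm y ^ k" using PkE[OF assms(2)] by blast
  show ?thesis
  proof (rule PkI[where C="C1 + C2"])
    fix y :: 'a assume y: "0 < norm y" "norm y < R"
    have "\<bar>f y + g y\<bar> \<le> \<bar>f y\<bar> + \<bar>g y\<bar>" by (rule abs_triangle_ineq)
    also have "\<dots> \<le> C1 / norm y ^ k + C2 / norm y ^ k" using C1[OF y] C2[OF y] by linarith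
    finally show "\<bar>f y + g y\<bar> \<le> (C1 + C2) / norm y ^ k" by (simp add: add_divide_distrib)
  qed
qed

lemma Pk_mult: assumes "Pk R j f" "Pk R k g" shows "Pk R (j + k) (\<lambda>y. f y * g y)"
proof -
  obtain C1 where C1: "\<And>y. 0 < norm y \<Longrightarrow> norm y < R \<Longrightarrow> \<bar>f y\<bar> \<le> C1 / norm y ^ j" using PkE[OF assms(1)] by blast
  obtain C2 where C2: "\<And>y. 0 < norm y \<Longrightarrow> norm y < R \<Longrightarrow> \<bar>g y\<bar> \<le> C2 / norm y ^ k" using PkE[OF assms(2)] by blast
  show ?thesis
  proof (rule PkI[where C="C1 * C2"])
    fix y :: 'a assume y: "0 < norm y" "norm y < R"
    have "\<bar>f y * g y\<bar> = \<bar>f y\<bar> * \<bar>g y\<bar>" by (simp add: abs_mult)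
    also have "\<dots> \<le> (C1 / norm y ^ j) * (C2 / norm y ^ k)"
      using C1[OF y] C2[OF y] by (intro mult_mono) auto
    also have "\<dots> = (C1 * C2) / norm y ^ (j + k)" by (simp add: power_add)
    finally show "\<bar>f y * g y\<bar> \<le> (C1 * C2) / norm y ^ (j + k)" .
  qed
qed

lemma Pk_mono: assumes "Pk R j f" "j \<le> k" "R > 0" shows "Pk R k f"
proof -
  obtain C where C0: "C \<ge> 0" and C: "\<And>y. 0 < norm y \<Longrightarrow> norm y < R \<Longrightarrow> \<bar>f y\<bar> \<le> C / norm y ^ j"
    using PkE[OF assms(1)] by blast
  show ?thesis
  proof (rule PkI[where C="C * R ^ (k - j)"])
    fix y :: 'a assume y: "0 < norm y" "norm y < R"
    have kk: "k = j + (k - j)" using assms(2) by simp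
    have "C / norm y ^ j = C * norm y ^ (k - j) / norm y ^ k"
      using y by (subst (2) kk) (simp add: power_add)
    also have "\<dots> \<le> C * R ^ (k - j) / norm y ^ k"
      using y C0 by (intro divide_right_mono mult_left_mono power_mono) auto
    finally show "\<bar>f y\<bar> \<le> C * R ^ (k - j) / norm y ^ k" using C[OF y] by linarith
  qed
qed

lemma Pk_cmult: "Pk R k f \<Longrightarrow> Pk R k (\<lambda>y. a * f y)"
  using Pk_mult[OF Pk_const[where a=a], of R k f] by simp

lemma Pk_uminus: "Pk R k f \<Longrightarrow> Pk R k (\<lambda>y. - f y)"
  using Pk_cmult[of R k f "-1"] by simp

lemma Pk_diff: "Pk R k f \<Longrightarrow> Pk R k g \<Longrightarrow> Pk R k (\<lambda>y. f y - g y)"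
  using Pk_add[of R k f "\<lambda>y. - g y"] Pk_uminus[of R k g] by simp

lemma Pk_mult_0: "Pk R 0 f \<Longrightarrow> Pk R k g \<Longrightarrow> Pk R k (\<lambda>y. f y * g y)"
  using Pk_mult[of R 0 f k g] by simp

lemma Pk_mult_11: "Pk R 1 f \<Longrightarrow> Pk R 1 g \<Longrightarrow> Pk R 2 (\<lambda>y. f y * g y)"
  using Pk_mult[of R 1 f 1 g] by (simp add: numeral_2_eq_2)

lemma Pk_inv_norm: "Pk R 1 (\<lambda>y. 1 / norm y)"
  by (rule PkI[where C=1]) auto

lemma integrable_Pk2:
  fixes f :: "'a::euclidean_space \<Rightarrow> real"
  assumes R: "R > 0" and D: "DIM('a) \<ge> 3" and P: "Pk R 2 f"
    and zero: "\<And>y. norm y \<ge> R \<Longrightarrow> f y = 0"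
    and cont: "continuous_on (- {0}) f"
  shows "integrable lborel f"
proof -
  obtain C where C0: "C \<ge> 0" and C: "\<And>y. 0 < norm y \<Longrightarrow> norm y < R \<Longrightarrow> \<bar>f y\<bar> \<le> C / norm y ^ 2"
    using PkE[OF P] by blast
  have meas: "f \<in> borel_measurable lborel"
    using borel_measurable_continuous_countable_exceptions[of "{0}" f] cont by simp
  have int: "integrable lborel (\<lambda>y::'a. C * (indicator (ball 0 R) y / norm y ^ 2))"
    using W_integrable[OF R D] by (rule integrable_mult_right)
  show ?thesis
  proof (rule Bochner_Integration.integrable_bound[OF int meas])
    show "AE y in lborel. norm (f y) \<le> norm (C * (indicator (ball 0 R) y / norm y ^ 2))"
      using AE_lborel_singleton[of 0]
    proof eventually_elim
      case (elim y)
      show ?case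
      proof (cases "norm y < R")
        case True thus ?thesis using C[of y] elim C0 by (auto simp: indicator_def)
      next
        case False thus ?thesis using zero[of y] by simp
      qed
    qed
  qed
qed


locale hardy2 = hardy \<psi> u for \<psi> :: "real \<Rightarrow> real" and u :: "real ^ 'n \<Rightarrow> real" +
  fixes R c C M :: real
  assumes R: "R > 0"
    and supp: "\<And>y. norm y \<ge> R \<Longrightarrow> u y = 0 \<and> eucl_grad u y = 0"
    and c: "c > 0"
    and psib: "\<And>s. 0 < s \<Longrightarrow> s \<le> R \<Longrightarrow>
       c * s \<le> \<psi> s \<and> \<psi> s \<le> C * s \<and> \<bar>deriv \<psi> s\<bar> \<le> C \<and> \<bar>deriv (deriv \<psi>) s\<bar> \<le> C"
    and Mb: "\<And>y. \<bar>u y\<bar> \<le> M \<and> norm (eucl_grad u y) \<le> M"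
begin


definition G1 where "G1 = (\<lambda>x. model_grad_sq \<psi> u x * model_density \<psi> x)"
definition G2 where "G2 = (\<lambda>x. ((2 * K_rad \<psi> (norm x) + (real CARD('n) - 3) * H_tan \<psi> (norm x)) * (u x)\<^sup>2) * model_density \<psi> x)"
definition G3 where "G3 = (\<lambda>x. ((u x)\<^sup>2 / (norm x)\<^sup>2) * model_density \<psi> x)"
definition G4 where "G4 = (\<lambda>x. ((u x)\<^sup>2 / (\<psi> (norm x))\<^sup>2) * model_density \<psi> x)"

definition LL where "LL y = 1 / (2 * norm y) - (real CARD('n) - 1) * deriv \<psi> (norm y) / (2 * \<psi> (norm y))"
definition hh where "hh y = model_density \<psi> y * (u y)\<^sup>2 * (1 / (2 * (norm y)\<^sup>2) - (real CARD('n) - 1) * deriv \<psi> (norm y) / (2 * norm y * \<psi> (norm y)))"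
definition kk where "kk y = model_density \<psi> y *
   ((real CARD('n) - 1) * (deriv \<psi> (norm y) / \<psi> (norm y)) * (u y)\<^sup>2 * LL y + 2 * u y * radial_deriv u y * LL y
    + (u y)\<^sup>2 * (- 1 / (2 * (norm y)\<^sup>2) - (real CARD('n) - 1) * (deriv (deriv \<psi>) (norm y) / \<psi> (norm y) - (deriv \<psi> (norm y) / \<psi> (norm y))\<^sup>2) / 2))"

lemma psi_norm_pos: "y \<noteq> 0 \<Longrightarrow> \<psi> (norm y) > 0"
  using psi_pos by simp

lemma radial_eq: "radial_deriv u y = inner (y /\<^sub>R norm y) (eucl_grad u y)"
  by (rule radial_inner[OF u_smooth])

lemma cont_comp_psi[continuous_intros]: "continuous_on S f \<Longrightarrow> continuous_on S (\<lambda>x. \<psi> (f x))"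
  using continuous_on_compose2[OF cont_psi] by blast
lemma cont_comp_dpsi[continuous_intros]: "continuous_on S f \<Longrightarrow> continuous_on S (\<lambda>x. deriv \<psi> (f x))"
  using continuous_on_compose2[OF cont_dpsi] by blast
lemma cont_comp_ddpsi[continuous_intros]: "continuous_on S f \<Longrightarrow> continuous_on S (\<lambda>x. deriv (deriv \<psi>) (f x))"
  using continuous_on_compose2[OF cont_ddpsi] by blast
lemma cont_comp_u[continuous_intros]: "continuous_on S f \<Longrightarrow> continuous_on S (\<lambda>x. u (f x))"
  using continuous_on_compose2[OF uD(4)] by blast
lemma cont_comp_grad[continuous_intros]: "continuous_on S f \<Longrightarrow> continuous_on S (\<lambda>x. eucl_grad u (f x))"
  using continuous_on_compose2[OF cont_grad] by blast

lemma cont_radial[continuous_intros]: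
  "continuous_on S f \<Longrightarrow> (\<And>x. x \<in> S \<Longrightarrow> f x \<noteq> 0) \<Longrightarrow> continuous_on S (\<lambda>x. radial_deriv u (f x))"
  unfolding radial_eq by (intro continuous_intros) auto

lemma cont_density[continuous_intros]:
  "continuous_on S f \<Longrightarrow> (\<And>x. x \<in> S \<Longrightarrow> f x \<noteq> 0) \<Longrightarrow> continuous_on S (\<lambda>x. model_density \<psi> (f x))"
  unfolding model_density_def by (intro continuous_intros) auto

lemma cont_G1: "continuous_on (-{0}) G1"
  unfolding G1_def model_grad_sq_def by (intro continuous_intros) (auto simp: psi_norm_pos[THEN less_imp_neq, symmetric])

lemma cont_G2: "continuous_on (-{0}) G2"
  unfolding G2_def K_rad_def H_tan_def by (intro continuous_intros) (auto simp: psi_norm_pos[THEN less_imp_neq, symmetric])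
lemma cont_G3: "continuous_on (-{0}) G3"
  unfolding G3_def by (intro continuous_intros) (auto simp: psi_norm_pos[THEN less_imp_neq, symmetric])
lemma cont_G4: "continuous_on (-{0}) G4"
  unfolding G4_def by (intro continuous_intros) (auto simp: psi_norm_pos[THEN less_imp_neq, symmetric])
lemma cont_hh: "continuous_on (-{0}) hh"
  unfolding hh_def[abs_def] by (intro continuous_intros) (auto simp: psi_norm_pos[THEN less_imp_neq, symmetric])
lemma cont_LL[continuous_intros]: "continuous_on S f \<Longrightarrow> (\<And>x. x \<in> S \<Longrightarrow> f x \<noteq> 0) \<Longrightarrow> continuous_on S (\<lambda>x. LL (f x))"
  unfolding LL_def by (intro continuous_intros) (auto simp: psi_norm_pos[THEN less_imp_neq, symmetric])
lemma cont_kk: "continuous_on (-{0}) kk"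
  unfolding kk_def[abs_def] by (intro continuous_intros) (auto simp: psi_norm_pos[THEN less_imp_neq, symmetric])

lemma C_pos: "C > 0"
proof -
  have h: "c * R \<le> \<psi> R" "\<psi> R \<le> C * R" using psib[of R] R by auto
  hence "c * R \<le> C * R" by linarith
  hence "c \<le> C" using R by simp
  thus ?thesis using c by simp
qed

lemma M_nonneg: "M \<ge> 0" using Mb[of 0] by linarith

lemma radial_bound: "\<bar>radial_deriv u y\<bar> \<le> norm (eucl_grad u y)"
proof (cases "y = 0")
  case True thus ?thesis by (simp add: radial_eq)
next
  case False
  have "\<bar>radial_deriv u y\<bar> \<le> norm (y /\<^sub>R norm y) * norm (eucl_grad u y)"
    unfolding radial_eq by (rule Cauchy_Schwarz_ineq2)
  thus ?thesis using False by simp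
qed

lemma radial_zero: "norm y \<ge> R \<Longrightarrow> radial_deriv u y = 0"
  using supp[of y] by (simp add: radial_eq)

lemma P_u: "Pk R 0 u" by (rule Pk_bdd[where B=M]) (use Mb in auto)
lemma P_g: "Pk R 0 (\<lambda>y::real^'n. norm (eucl_grad u y))" by (rule Pk_bdd[where B=M]) (use Mb in auto)
lemma P_b: "Pk R 0 (radial_deriv u)"
  by (rule Pk_bdd[where B=M]) (use Mb radial_bound in \<open>auto intro: order_trans\<close>)
lemma P_p1: "Pk R 0 (\<lambda>y::real^'n. deriv \<psi> (norm y))" by (rule Pk_bdd[where B=C]) (use psib in auto)
lemma P_p2: "Pk R 0 (\<lambda>y::real^'n. deriv (deriv \<psi>) (norm y))" by (rule Pk_bdd[where B=C]) (use psib in auto)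
lemma P_rho: "Pk R 0 (model_density \<psi> :: real^'n \<Rightarrow> real)"
proof (rule Pk_bdd[where B="C ^ (CARD('n) - 1)"])
  fix y :: "real^'n" assume y: "0 < norm y" "norm y < R"
  have b: "c * norm y \<le> \<psi> (norm y)" "\<psi> (norm y) \<le> C * norm y" using psib[of "norm y"] y by auto
  have q0: "0 \<le> \<psi> (norm y) / norm y" using psi_norm_pos[of y] y by auto
  have q1: "\<psi> (norm y) / norm y \<le> C" using b y by (simp add: divide_le_eq)
  show "\<bar>model_density \<psi> y\<bar> \<le> C ^ (CARD('n) - 1)"
    unfolding model_density_def using q0 q1 by (simp add: power_mono)
qed
lemma P_ip: "Pk R 1 (\<lambda>y::real^'n. 1 / \<psi> (norm y))"
proof (rule PkI[where C="1/c"])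
  fix y :: "real^'n" assume y: "0 < norm y" "norm y < R"
  have b: "c * norm y \<le> \<psi> (norm y)" using psib[of "norm y"] y by auto
  have "0 < c * norm y" using c y by simp
  hence "1 / \<psi> (norm y) \<le> 1 / (c * norm y)" using b by (intro divide_left_mono) auto
  thus "\<bar>1 / \<psi> (norm y)\<bar> \<le> 1 / c / norm y ^ 1" using b \<open>0 < c * norm y\<close> by simp
qed
lemma P_sp: "Pk R 0 (\<lambda>y::real^'n. norm y / \<psi> (norm y))"
proof (rule Pk_bdd[where B="1/c"])
  fix y :: "real^'n" assume y: "0 < norm y" "norm y < R"
  have b: "c * norm y \<le> \<psi> (norm y)" using psib[of "norm y"] y by auto
  have "0 < c * norm y" using c y by simp
  have p: "\<psi> (norm y) > 0" using psi_norm_pos[of y] y by auto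
  thus "\<bar>norm y / \<psi> (norm y)\<bar> \<le> 1 / c" using b c y by (simp add: divide_le_eq field_simps)
qed

lemma Pk_sq0: "Pk R 0 f \<Longrightarrow> Pk R 0 (\<lambda>y. (f y)^2)"
  using Pk_mult_0[of R f 0 f] by (simp add: power2_eq_square)
lemma Pk_mult_r0: "Pk R k f \<Longrightarrow> Pk R 0 g \<Longrightarrow> Pk R k (\<lambda>y. f y * g y)"
  using Pk_mult[of R k f 0 g] by simp
lemma Pk_12: "Pk R 1 f \<Longrightarrow> Pk R 2 f" using Pk_mono[of R 1 f 2] R by simp
lemma Pk_02: "Pk R 0 f \<Longrightarrow> Pk R 2 f" using Pk_mono[of R 0 f 2] R by simp

lemma pos_in: "0 < norm y \<Longrightarrow> \<psi> (norm y) \<noteq> 0"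
  using psi_norm_pos[of y] by auto

lemma P_G1: "Pk R 2 G1"
proof -
  have "Pk R 0 G1"
    unfolding G1_def model_grad_sq_def
    by (intro Pk_mult_0 Pk_add Pk_diff Pk_sq0 P_b P_sp P_g P_rho)
  thus ?thesis by (rule Pk_02)
qed

lemma P_q: "Pk R 1 (\<lambda>y::real^'n. deriv \<psi> (norm y) / \<psi> (norm y))"
  by (rule Pk_cong[OF _ Pk_mult_0[OF P_p1 P_ip]]) simp

lemma P_K: "Pk R 2 (\<lambda>y::real^'n. K_rad \<psi> (norm y))"
proof -
  have "Pk R 1 (\<lambda>y::real^'n. - (deriv (deriv \<psi>) (norm y) * (1 / \<psi> (norm y))))"
    by (intro Pk_uminus Pk_mult_0[OF P_p2 P_ip])
  hence "Pk R 1 (\<lambda>y::real^'n. K_rad \<psi> (norm y))"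
    by (rule Pk_cong[rotated]) (simp add: K_rad_def)
  thus ?thesis by (rule Pk_12)
qed

lemma P_H: "Pk R 2 (\<lambda>y::real^'n. H_tan \<psi> (norm y))"
proof -
  have "Pk R 2 (\<lambda>y::real^'n. - ((deriv \<psi> (norm y))^2 - 1) * ((1 / \<psi> (norm y)) * (1 / \<psi> (norm y))))"
    by (intro Pk_mult_0 Pk_uminus Pk_diff Pk_sq0 P_p1 Pk_const Pk_mult_11 P_ip)
  thus ?thesis
    by (rule Pk_cong[rotated]) (simp add: H_tan_def power2_eq_square)
qed

lemma P_G2: "Pk R 2 G2"
proof -
  have "Pk R 2 (\<lambda>x. ((2 * K_rad \<psi> (norm x) + (real CARD('n) - 3) * H_tan \<psi> (norm x)) * (u x)\<^sup>2) * model_density \<psi> x)"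
    by (intro Pk_mult_r0 Pk_add Pk_cmult P_K P_H Pk_sq0 P_u P_rho)
  thus ?thesis unfolding G2_def .
qed

lemma P_G3: "Pk R 2 G3"
proof -
  have "Pk R 2 (\<lambda>y. ((1 / norm y) * (1 / norm y)) * ((u y)^2 * model_density \<psi> y))"
    by (intro Pk_mult_r0 Pk_mult_11 Pk_inv_norm Pk_mult_0 Pk_sq0 P_u P_rho)
  thus ?thesis unfolding G3_def
    by (rule Pk_cong[rotated]) (simp add: power2_eq_square)
qed

lemma P_G4: "Pk R 2 G4"
proof -
  have "Pk R 2 (\<lambda>y. ((1 / \<psi> (norm y)) * (1 / \<psi> (norm y))) * ((u y)^2 * model_density \<psi> y))"
    by (intro Pk_mult_r0 Pk_mult_11 P_ip Pk_mult_0 Pk_sq0 P_u P_rho)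
  thus ?thesis unfolding G4_def
    by (rule Pk_cong[rotated]) (simp add: power2_eq_square)
qed

lemma P_hh: "Pk R 2 hh"
proof -
  have "Pk R 2 (\<lambda>y. (model_density \<psi> y * (u y)^2) * ((1/2) * ((1 / norm y) * (1 / norm y))
       - ((real CARD('n) - 1) / 2) * ((deriv \<psi> (norm y) * (1 / norm y)) * (1 / \<psi> (norm y)))))"
    by (intro Pk_mult_0 Pk_sq0 P_u P_rho Pk_diff Pk_cmult Pk_mult_11 Pk_inv_norm P_ip P_p1)
  thus ?thesis unfolding hh_def[abs_def]
    by (rule Pk_cong[rotated]) (simp add: power2_eq_square)
qed

lemma P_LL: "Pk R 1 (\<lambda>y::real^'n. LL y)"
proof -
  have "Pk R 1 (\<lambda>y::real^'n. (1/2) * (1 / norm y) - ((real CARD('n) - 1) / 2) * (deriv \<psi> (norm y) * (1 / \<psi> (norm y))))"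
    by (intro Pk_diff Pk_cmult Pk_inv_norm Pk_mult_0 P_p1 P_ip)
  thus ?thesis unfolding LL_def
    by (rule Pk_cong[rotated]) simp
qed

lemma P_kk: "Pk R 2 kk"
proof -
  have T1: "Pk R 2 (\<lambda>y. (real CARD('n) - 1) * (deriv \<psi> (norm y) / \<psi> (norm y)) * (u y)\<^sup>2 * LL y)"
  proof -
    have "Pk R 2 (\<lambda>y. (real CARD('n) - 1) * (((deriv \<psi> (norm y) / \<psi> (norm y)) * LL y) * (u y)\<^sup>2))"
      by (intro Pk_cmult Pk_mult_r0 Pk_mult_11 P_q P_LL Pk_sq0 P_u)
    thus ?thesis by (rule Pk_cong[rotated]) simp
  qed
  have T2: "Pk R 2 (\<lambda>y. 2 * u y * radial_deriv u y * LL y)"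
    by (intro Pk_12 Pk_mult_0 Pk_cmult P_u P_b P_LL)
  have T3: "Pk R 2 (\<lambda>y. (u y)\<^sup>2 * (- 1 / (2 * (norm y)\<^sup>2) - (real CARD('n) - 1) * (deriv (deriv \<psi>) (norm y) / \<psi> (norm y) - (deriv \<psi> (norm y) / \<psi> (norm y))\<^sup>2) / 2))"
  proof -
    have P2: "Pk R 2 (\<lambda>y::real^'n. deriv (deriv \<psi>) (norm y) / \<psi> (norm y))"
      by (rule Pk_12, rule Pk_cong[OF _ Pk_mult_0[OF P_p2 P_ip]]) simp
    have "Pk R 2 (\<lambda>y. (u y)\<^sup>2 * ((-1/2) * ((1 / norm y) * (1 / norm y)) - ((real CARD('n) - 1)/2) * (deriv (deriv \<psi>) (norm y) / \<psi> (norm y) - (deriv \<psi> (norm y) / \<psi> (norm y)) * (deriv \<psi> (norm y) / \<psi> (norm y)))))"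
      by (intro Pk_mult_0 Pk_sq0 P_u Pk_diff Pk_cmult Pk_mult_11 Pk_inv_norm P2 P_q)
    thus ?thesis by (rule Pk_cong[rotated]) (simp add: power2_eq_square field_simps)
  qed
  have "Pk R 2 (\<lambda>y. model_density \<psi> y * ((real CARD('n) - 1) * (deriv \<psi> (norm y) / \<psi> (norm y)) * (u y)\<^sup>2 * LL y + 2 * u y * radial_deriv u y * LL y
    + (u y)\<^sup>2 * (- 1 / (2 * (norm y)\<^sup>2) - (real CARD('n) - 1) * (deriv (deriv \<psi>) (norm y) / \<psi> (norm y) - (deriv \<psi> (norm y) / \<psi> (norm y))\<^sup>2) / 2)))"
    by (intro Pk_mult_0 P_rho Pk_add T1 T2 T3)
  thus ?thesis unfolding kk_def[abs_def] .
qed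

lemma DIM_ge3: "DIM(real^'n) \<ge> 3" using N3 by simp

lemma zero_out:
  assumes "norm y \<ge> R"
  shows "G1 y = 0" "G2 y = 0" "G3 y = 0" "G4 y = 0" "hh y = 0" "kk y = 0"
  using supp[OF assms] radial_zero[OF assms]
  by (simp_all add: G1_def G2_def G3_def G4_def hh_def kk_def model_grad_sq_def)

lemma int_G1: "integrable lborel G1"
  by (rule integrable_Pk2[OF R DIM_ge3 P_G1 zero_out(1) cont_G1])
lemma int_G2: "integrable lborel G2"
  by (rule integrable_Pk2[OF R DIM_ge3 P_G2 zero_out(2) cont_G2])
lemma int_G3: "integrable lborel G3"
  by (rule integrable_Pk2[OF R DIM_ge3 P_G3 zero_out(3) cont_G3])
lemma int_G4: "integrable lborel G4"
  by (rule integrable_Pk2[OF R DIM_ge3 P_G4 zero_out(4) cont_G4])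
lemma int_hh: "integrable lborel hh"
  by (rule integrable_Pk2[OF R DIM_ge3 P_hh zero_out(5) cont_hh])
lemma int_kk: "integrable lborel kk"
  by (rule integrable_Pk2[OF R DIM_ge3 P_kk zero_out(6) cont_kk])

lemma meas_kk[measurable]: "kk \<in> borel_measurable borel"
  using borel_measurable_continuous_countable_exceptions[of "{0}" kk] cont_kk by simp
lemma meas_hh[measurable]: "hh \<in> borel_measurable borel"
  using borel_measurable_continuous_countable_exceptions[of "{0}" hh] cont_hh by simp

end

lemma alg1:
  fixes a b g s p p1 p2 \<rho> n :: real
  assumes s: "s \<noteq> 0" and p: "p \<noteq> 0"
  defines "L \<equiv> 1 / (2 * s) - (n - 1) * p1 / (2 * p)"
  shows "(b\<^sup>2 + (s / p)\<^sup>2 * (g\<^sup>2 - b\<^sup>2)) * \<rho>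
     + (n - 1) / 4 * (((2 * (- p2 / p) + (n - 3) * (- (p1\<^sup>2 - 1) / p\<^sup>2)) * a\<^sup>2) * \<rho>)
     - (1 / 4 * ((a\<^sup>2 / s\<^sup>2) * \<rho>) + (n - 1) * (n - 3) / 4 * ((a\<^sup>2 / p\<^sup>2) * \<rho>))
     - \<rho> * ((n - 1) * (p1 / p) * a\<^sup>2 * L + 2 * a * b * L
         + a\<^sup>2 * (- 1 / (2 * s\<^sup>2) - (n - 1) * (p2 / p - (p1 / p)\<^sup>2) / 2))
   = \<rho> * ((s / p)\<^sup>2 * (g\<^sup>2 - b\<^sup>2)) + \<rho> * (b - a * L)\<^sup>2"
  unfolding L_def using s p by (simp add: field_simps power2_eq_square)

context hardy2 begin

definition DD where "DD y = G1 y + (real CARD('n) - 1) / 4 * G2 y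
   - (1 / 4 * G3 y + (real CARD('n) - 1) * (real CARD('n) - 3) / 4 * G4 y)"

lemma density_nonneg: "y \<noteq> 0 \<Longrightarrow> model_density \<psi> y \<ge> 0"
  unfolding model_density_def using psi_norm_pos[of y] by simp

lemma pointwise: assumes y: "y \<noteq> 0" shows "kk y \<le> DD y"
proof -
  have s: "norm y \<noteq> 0" using y by simp
  have p: "\<psi> (norm y) \<noteq> 0" using psi_norm_pos[OF y] by simp
  have eq: "DD y - kk y = model_density \<psi> y * ((norm y / \<psi> (norm y))\<^sup>2 * ((norm (eucl_grad u y))\<^sup>2 - (radial_deriv u y)\<^sup>2))
      + model_density \<psi> y * (radial_deriv u y - u y * LL y)\<^sup>2"
    unfolding DD_def G1_def G2_def G3_def G4_def kk_def LL_def model_grad_sq_def K_rad_def H_tan_def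
    by (rule alg1[OF s p])
  have "(radial_deriv u y)\<^sup>2 \<le> (norm (eucl_grad u y))\<^sup>2"
    using radial_bound[of y] abs_le_square_iff[of "radial_deriv u y" "norm (eucl_grad u y)"] by simp
  hence "0 \<le> DD y - kk y" unfolding eq using density_nonneg[OF y]
    by (intro add_nonneg_nonneg mult_nonneg_nonneg) auto
  thus ?thesis by simp
qed

end

lemma alg2:
  fixes t r0 p p1 p2 a d :: real and N k :: nat
  assumes N: "N = Suc (Suc k)" and t: "t > 0" and r0: "r0 > 0" and p: "p > 0"
  shows "0 * (p ^ (N - 1) * a\<^sup>2 * (1 / (2 * (t * r0)) - (real N - 1) * p1 / (2 * p))) +
     ((real (N - 1) * (p1 * (1 * r0 + 0 * t) * p ^ (N - 1 - Suc 0)) * a\<^sup>2 +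
       real 2 * (d * a ^ (2 - Suc 0)) * p ^ (N - 1)) *
      (1 / (2 * (t * r0)) - (real N - 1) * p1 / (2 * p)) +
      ((0 * (2 * (t * r0)) - 1 * (0 * (t * r0) + (1 * r0 + 0 * t) * 2)) /
       (2 * (t * r0) * (2 * (t * r0))) -
       ((0 * p1 + p2 * (1 * r0 + 0 * t) * (real N - 1)) * (2 * p) -
        (real N - 1) * p1 * (0 * p + p1 * (1 * r0 + 0 * t) * 2)) /
       (2 * p * (2 * p))) *
      (p ^ (N - 1) * a\<^sup>2)) *
     (1 / r0 ^ N) =
     t ^ (N - 1) * ((p / (t * r0)) ^ (N - 1) *
      ((real N - 1) * (p1 / p) * a\<^sup>2 * (1 / (2 * (t * r0)) - (real N - 1) * p1 / (2 * p))
       + 2 * a * (d / r0) * (1 / (2 * (t * r0)) - (real N - 1) * p1 / (2 * p))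
       + a\<^sup>2 * (- 1 / (2 * (t * r0)\<^sup>2) - (real N - 1) * (p2 / p - (p1 / p)\<^sup>2) / 2)))"
proof -
  have e: "real (N - 1) = real N - 1" using N by simp
  show ?thesis unfolding N using t r0 p
    by (simp add: field_simps power_divide power_mult_distrib power2_eq_square)
qed

context hardy2 begin

lemma fd_scale: "frechet_derivative u (at y) (k *\<^sub>R v) = k * frechet_derivative u (at y) v"
  by (simp add: uD(3) sum_distrib_left mult.assoc)

lemma ray_u: "((\<lambda>t. u (t *\<^sub>R x)) has_real_derivative frechet_derivative u (at (t *\<^sub>R x)) x) (at t)"
proof -
  have d1: "((\<lambda>t::real. t *\<^sub>R x) has_derivative (\<lambda>h. h *\<^sub>R x)) (at t)"
    by (intro derivative_eq_intros) auto
  have "((\<lambda>t. u (t *\<^sub>R x)) has_derivative (\<lambda>h. frechet_derivative u (at (t *\<^sub>R x)) (h *\<^sub>R x))) (at t)"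
    using has_derivative_compose[OF d1 uD(1)[of "t *\<^sub>R x"]] by simp
  also have "(\<lambda>h. frechet_derivative u (at (t *\<^sub>R x)) (h *\<^sub>R x)) = (\<lambda>h. frechet_derivative u (at (t *\<^sub>R x)) x * h)"
  proof
    fix h show "frechet_derivative u (at (t *\<^sub>R x)) (h *\<^sub>R x) = frechet_derivative u (at (t *\<^sub>R x)) x * h"
      by (subst fd_scale) (rule mult.commute)
  qed
  finally show ?thesis by (simp add: has_field_derivative_def)
qed

declare ray_u[derivative_intros]

lemma psi_chain[derivative_intros]:
  "(f has_real_derivative f') (at t) \<Longrightarrow> ((\<lambda>t. \<psi> (f t)) has_real_derivative deriv \<psi> (f t) * f') (at t)"
  using DERIV_chain2[OF psiD(1)] by blast

lemma dpsi_chain[derivative_intros]: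
  "(f has_real_derivative f') (at t) \<Longrightarrow> ((\<lambda>t. deriv \<psi> (f t)) has_real_derivative deriv (deriv \<psi>) (f t) * f') (at t)"
  using DERIV_chain2[OF psiD(2)] by blast

lemma radial_ray: assumes t: "t > 0" and x: "x \<noteq> 0"
  shows "frechet_derivative u (at (t *\<^sub>R x)) x = norm x * radial_deriv u (t *\<^sub>R x)"
proof -
  have e: "(t *\<^sub>R x) /\<^sub>R norm (t *\<^sub>R x) = (1 / norm x) *\<^sub>R x" using t x by (simp add: field_simps)
  have "radial_deriv u (t *\<^sub>R x) = frechet_derivative u (at (t *\<^sub>R x)) ((1 / norm x) *\<^sub>R x)"
    unfolding radial_deriv_def e ..
  also have "\<dots> = (1 / norm x) * frechet_derivative u (at (t *\<^sub>R x)) x" by (rule fd_scale)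
  finally have "radial_deriv u (t *\<^sub>R x) = (1 / norm x) * frechet_derivative u (at (t *\<^sub>R x)) x" .
  thus ?thesis using x by simp
qed

definition Phi where "Phi x t = (1 / norm x ^ CARD('n)) * (\<psi> (t * norm x) ^ (CARD('n) - 1) * (u (t *\<^sub>R x))\<^sup>2
   * (1 / (2 * (t * norm x)) - (real CARD('n) - 1) * deriv \<psi> (t * norm x) / (2 * \<psi> (t * norm x))))"

lemma Phi_deriv: assumes t: "t > 0" and x: "x \<noteq> 0"
  shows "(Phi x has_real_derivative t ^ (CARD('n) - 1) * kk (t *\<^sub>R x)) (at t)"
proof -
  define k where "k = CARD('n) - 2"
  have k: "CARD('n) = Suc (Suc k)" using N3 unfolding k_def by simp
  have r0: "norm x > 0" using x by simp
  have p: "\<psi> (t * norm x) > 0" using psi_pos t r0 by simp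
  have nt: "norm (t *\<^sub>R x) = t * norm x" using t by simp
  have rd: "radial_deriv u (t *\<^sub>R x) = frechet_derivative u (at (t *\<^sub>R x)) x / norm x"
    using radial_ray[OF t x] r0 by (simp add: field_simps)
  show ?thesis unfolding Phi_def[abs_def]
    apply (rule derivative_eq_intros refl | (use t x p in simp; fail))+
    unfolding kk_def LL_def model_density_def nt rd
    by (rule alg2[OF k t r0 p])
qed

lemma Phi_hh: assumes t: "t > 0" and x: "x \<noteq> 0"
  shows "Phi x t = t ^ CARD('n) * hh (t *\<^sub>R x)"
proof -
  define k where "k = CARD('n) - 2"
  have k: "CARD('n) = Suc (Suc k)" using N3 unfolding k_def by simp
  have r0: "norm x > 0" using x by simp
  have p: "\<psi> (t * norm x) > 0" using psi_pos t r0 by simp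
  have nt: "norm (t *\<^sub>R x) = t * norm x" using t by simp
  show ?thesis unfolding Phi_def hh_def model_density_def nt k using t r0 p
    by (simp add: field_simps power_divide power_mult_distrib power2_eq_square)
qed

lemma isCont_kk_ray: assumes t: "t > 0" and x: "x \<noteq> 0"
  shows "isCont (\<lambda>t. t ^ (CARD('n) - 1) * kk (t *\<^sub>R x)) t"
proof -
  have c1: "isCont kk (t *\<^sub>R x)"
    using cont_kk t x by (simp add: continuous_on_eq_continuous_at open_Compl)
  have "isCont (\<lambda>t. kk (t *\<^sub>R x)) t"
    by (rule isCont_o2[where f="\<lambda>t. t *\<^sub>R x" and g=kk, OF _ c1]) (intro continuous_intros)
  thus ?thesis by (intro continuous_intros)
qed

lemma ray_FTC: assumes x: "x \<noteq> 0"
  shows "(\<integral>t. t ^ (CARD('n) - 1) * kk (t *\<^sub>R x) * indicator {1..2} t \<partial>lborel)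
       = 2 ^ CARD('n) * hh (2 *\<^sub>R x) - hh x"
proof -
  have "(\<integral>t. t ^ (CARD('n) - 1) * kk (t *\<^sub>R x) * indicator {1..2} t \<partial>lborel) = Phi x 2 - Phi x 1"
  proof (rule integral_FTC_Icc_real)
    fix t :: real assume t: "1 \<le> t" "t \<le> 2"
    show "(Phi x has_real_derivative t ^ (CARD('n) - 1) * kk (t *\<^sub>R x)) (at t)"
      by (rule Phi_deriv[OF _ x]) (use t in simp)
    show "isCont (\<lambda>t. t ^ (CARD('n) - 1) * kk (t *\<^sub>R x)) t"
      by (rule isCont_kk_ray[OF _ x]) (use t in simp)
  qed simp
  also have "\<dots> = 2 ^ CARD('n) * hh (2 *\<^sub>R x) - hh x"
    using Phi_hh[OF _ x, of 2] Phi_hh[OF _ x, of 1] by simp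
  finally show ?thesis .
qed

end

lemma int_prod:
  fixes f :: "real \<Rightarrow> real" and g :: "'a::euclidean_space \<Rightarrow> real"
  assumes f: "integrable lborel f" and g: "integrable lborel g"
  shows "integrable (lborel \<Otimes>\<^sub>M lborel) (\<lambda>z. f (fst z) * g (snd z))"
proof -
  have mf[measurable]: "f \<in> borel_measurable borel" using borel_measurable_integrable[OF f] by simp
  have mg[measurable]: "g \<in> borel_measurable borel" using borel_measurable_integrable[OF g] by simp
  have ff: "(\<integral>\<^sup>+x. ennreal (norm (f x)) \<partial>lborel) < \<infinity>" using f by (simp add: integrable_iff_bounded)
  have gg: "(\<integral>\<^sup>+x. ennreal (norm (g x)) \<partial>lborel) < \<infinity>" using g by (simp add: integrable_iff_bounded)
  show ?thesis
  proof (rule integrableI_bounded)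
    show "(\<lambda>z. f (fst z) * g (snd z)) \<in> borel_measurable (lborel \<Otimes>\<^sub>M lborel)" by measurable
    have "(\<integral>\<^sup>+z. ennreal (norm (f (fst z) * g (snd z))) \<partial>(lborel \<Otimes>\<^sub>M lborel))
        = (\<integral>\<^sup>+x. \<integral>\<^sup>+y. ennreal (norm (f x)) * ennreal (norm (g y)) \<partial>lborel \<partial>lborel)"
      by (subst lborel.nn_integral_fst[symmetric]) (auto simp: abs_mult ennreal_mult)
    also have "\<dots> = (\<integral>\<^sup>+x. ennreal (norm (f x)) * (\<integral>\<^sup>+y. ennreal (norm (g y)) \<partial>lborel) \<partial>lborel)"
      by (simp add: nn_integral_cmult)
    also have "\<dots> = (\<integral>\<^sup>+x. ennreal (norm (f x)) \<partial>lborel) * (\<integral>\<^sup>+y. ennreal (norm (g y)) \<partial>lborel)"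
      by (simp add: nn_integral_multc)
    also have "\<dots> < \<infinity>" using ff gg by (simp add: ennreal_mult_less_top)
    finally show "(\<integral>\<^sup>+z. ennreal (norm (f (fst z) * g (snd z))) \<partial>(lborel \<Otimes>\<^sub>M lborel)) < \<infinity>" .
  qed
qed

context hardy2 begin

lemma kk_0: "kk 0 = 0"
proof -
  have "CARD('n) - 1 \<noteq> 0" using N3 by simp
  thus ?thesis by (simp add: kk_def model_density_def)
qed

lemma kk_bound: obtains K where "K \<ge> 0" "\<And>y. \<bar>kk y\<bar> \<le> K * (indicator (ball 0 R) y / norm y ^ 2)"
proof -
  obtain K where K0: "K \<ge> 0" and K: "\<And>y. 0 < norm y \<Longrightarrow> norm y < R \<Longrightarrow> \<bar>kk y\<bar> \<le> K / norm y ^ 2"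
    using PkE[OF P_kk] by blast
  have "\<bar>kk y\<bar> \<le> K * (indicator (ball 0 R) y / norm y ^ 2)" for y
  proof (cases "y = 0")
    case True thus ?thesis using kk_0 by simp
  next
    case False
    show ?thesis
    proof (cases "norm y < R")
      case True thus ?thesis using K[of y] False by (simp add: indicator_def)
    next
      case f2: False thus ?thesis using zero_out(6)[of y] by (simp add: indicator_def)
    qed
  qed
  thus ?thesis using that K0 by blast
qed

definition FF where "FF t x = t ^ (CARD('n) - 1) * kk (t *\<^sub>R x) * indicator {1..2::real} t"

lemma FF_int: "integrable (lborel \<Otimes>\<^sub>M lborel) (\<lambda>z. FF (fst z) (snd z))"
proof -
  obtain K where K0: "K \<ge> 0" and K: "\<And>y. \<bar>kk y\<bar> \<le> K * (indicator (ball 0 R) y / norm y ^ 2)"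
    using kk_bound by blast
  define W where "W = (\<lambda>y::real^'n. indicator (ball 0 R) y / norm y ^ 2)"
  have W0: "W y \<ge> 0" for y unfolding W_def by simp
  have iW: "integrable lborel W" unfolding W_def by (rule W_integrable[OF R DIM_ge3])
  have iI: "integrable lborel (\<lambda>t::real. indicator {1..2::real} t * (2 ^ (CARD('n) - 1) * K))"
    by (intro integrable_mult_left) simp
  have int: "integrable (lborel \<Otimes>\<^sub>M lborel) (\<lambda>z. (indicator {1..2::real} (fst z) * (2 ^ (CARD('n) - 1) * K)) * W (snd z))"
    by (rule int_prod[OF iI iW])
  show ?thesis
  proof (rule Bochner_Integration.integrable_bound[OF int])
    show "(\<lambda>z. FF (fst z) (snd z)) \<in> borel_measurable (lborel \<Otimes>\<^sub>M lborel)"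
      unfolding FF_def by measurable
    show "AE z in lborel \<Otimes>\<^sub>M lborel. norm (FF (fst z) (snd z)) \<le> norm (indicator {1..2::real} (fst z) * (2 ^ (CARD('n) - 1) * K) * W (snd z))"
    proof (rule AE_I2)
      fix z :: "real \<times> (real^'n)"
      obtain t x where z: "z = (t, x)" by (cases z)
      have "\<bar>FF t x\<bar> \<le> indicator {1..2::real} t * (2 ^ (CARD('n) - 1) * K) * W x"
      proof (cases "t \<in> {1..2}")
        case False thus ?thesis unfolding FF_def using W0 K0 by simp
      next
        case True
        hence t: "1 \<le> t" "t \<le> 2" by auto
        have tp: "\<bar>t ^ (CARD('n) - 1)\<bar> \<le> 2 ^ (CARD('n) - 1)" using t by (simp add: power_mono)
        have "\<bar>kk (t *\<^sub>R x)\<bar> \<le> K * W x"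
        proof -
          have "\<bar>kk (t *\<^sub>R x)\<bar> \<le> K * W (t *\<^sub>R x)" using K[of "t *\<^sub>R x"] by (simp only: W_def)
          also have "W (t *\<^sub>R x) \<le> W x"
          proof (cases "x = 0")
            case True thus ?thesis by simp
          next
            case False
            have nx: "norm (t *\<^sub>R x) = t * norm x" using t by simp
            have nle: "norm x \<le> t * norm x" using t mult_right_mono[of 1 t "norm x"] by simp
            hence i: "indicator (ball 0 R) (t *\<^sub>R x) \<le> (indicator (ball 0 R) x :: real)"
              unfolding indicator_def using nx by auto
            have "(norm x)^2 \<le> (t * norm x)^2" using nle by (intro power_mono) auto
            moreover have "0 < (t * norm x)^2 * (norm x)^2" using False t by simp
            ultimately have "1 / (t * norm x)^2 \<le> 1 / (norm x)^2" by (intro divide_left_mono) auto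
            hence ii: "1 / (t * norm x)^2 \<le> 1 / (norm x)^2" .
            have a1: "indicator (ball 0 R) (t *\<^sub>R x) / (t * norm x)^2 \<le> (indicator (ball 0 R) x :: real) / (t * norm x)^2"
              using i by (intro divide_right_mono) auto
            have a2: "(indicator (ball 0 R) x :: real) / (t * norm x)^2 \<le> indicator (ball 0 R) x / (norm x)^2"
              using mult_left_mono[OF ii, of "indicator (ball 0 R) x :: real"] by simp
            show ?thesis unfolding W_def nx using a1 a2 by linarith
          qed
          hence "K * W (t *\<^sub>R x) \<le> K * W x" using K0 by (rule mult_left_mono)
          finally show ?thesis .
        qed
        hence "\<bar>t ^ (CARD('n) - 1)\<bar> * \<bar>kk (t *\<^sub>R x)\<bar> \<le> 2 ^ (CARD('n) - 1) * (K * W x)"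
          using tp by (intro mult_mono) auto
        thus ?thesis unfolding FF_def using True by (simp add: abs_mult mult.assoc)
      qed
      thus "norm (FF (fst z) (snd z)) \<le> norm (indicator {1..2::real} (fst z) * (2 ^ (CARD('n) - 1) * K) * W (snd z))"
        using z W0 K0 by simp
    qed
  qed
qed

lemma int_hh2: "integrable lborel (\<lambda>x. hh (2 *\<^sub>R x))"
  using scale_int(1)[OF meas_hh, of 2] int_hh by simp

lemma int_hh_scale: "(\<integral>x. hh x \<partial>lborel) = 2 ^ CARD('n) * (\<integral>x. hh (2 *\<^sub>R x) \<partial>lborel)"
  using scale_int(2)[OF meas_hh, of 2] by simp

lemma int_kk_scale: "t > 0 \<Longrightarrow> (\<integral>x. kk (t *\<^sub>R x) \<partial>lborel) = (\<integral>x. kk x \<partial>lborel) / t ^ CARD('n)"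
  using scale_int(2)[OF meas_kk, of t] by simp

lemma ln2_int: "(\<integral>t. 1 / t * indicator {1..2::real} t \<partial>lborel) = ln 2"
proof -
  have "(\<integral>t. 1 / t * indicator {1..2::real} t \<partial>lborel) = ln 2 - ln 1"
  proof (rule integral_FTC_Icc_real)
    fix t :: real assume t: "1 \<le> t" "t \<le> 2"
    show "(ln has_real_derivative 1 / t) (at t)" using t by (auto intro!: derivative_eq_intros)
    show "isCont (\<lambda>t. 1 / t) t" using t by (auto intro!: continuous_intros)
  qed simp
  thus ?thesis by simp
qed

lemma int_kk_zero: "(\<integral>x. kk x \<partial>lborel) = 0"
proof -
  have ps: "pair_sigma_finite (lborel::real measure) (lborel::(real^'n) measure)"
    unfolding pair_sigma_finite_def by (simp add: sigma_finite_lborel)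
  have FI: "integrable (lborel \<Otimes>\<^sub>M lborel) (case_prod FF)"
    using FF_int by (simp add: split_beta')
  have Fub: "(\<integral>x. (\<integral>t. FF t x \<partial>lborel) \<partial>lborel) = (\<integral>t. (\<integral>x. FF t x \<partial>lborel) \<partial>lborel)"
    by (rule pair_sigma_finite.Fubini_integral[OF ps FI])
  have mI: "(\<lambda>x. \<integral>t. FF t x \<partial>lborel) \<in> borel_measurable lborel"
    using pair_sigma_finite.integrable_snd[OF ps FI] by (rule borel_measurable_integrable)
  have L: "(\<integral>x. (\<integral>t. FF t x \<partial>lborel) \<partial>lborel) = 0"
  proof -
    have "(\<integral>x. (\<integral>t. FF t x \<partial>lborel) \<partial>lborel) = (\<integral>x. 2 ^ CARD('n) * hh (2 *\<^sub>R x) - hh x \<partial>lborel)"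
    proof (rule integral_cong_AE)
      show "AE x in lborel. (\<integral>t. FF t x \<partial>lborel) = 2 ^ CARD('n) * hh (2 *\<^sub>R x) - hh x"
        using AE_lborel_singleton[of 0]
      proof eventually_elim
        case (elim x) show ?case unfolding FF_def by (rule ray_FTC[OF elim])
      qed
    qed (use int_hh int_hh2 mI in \<open>auto intro!: borel_measurable_integrable\<close>)
    also have "\<dots> = 2 ^ CARD('n) * (\<integral>x. hh (2 *\<^sub>R x) \<partial>lborel) - (\<integral>x. hh x \<partial>lborel)"
      using int_hh int_hh2 by simp
    also have "\<dots> = 0" using int_hh_scale by simp
    finally show ?thesis .
  qed
  have R: "(\<integral>t. (\<integral>x. FF t x \<partial>lborel) \<partial>lborel) = (\<integral>t. 1 / t * indicator {1..2::real} t \<partial>lborel) * (\<integral>x. kk x \<partial>lborel)"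
  proof -
    have eq: "(\<integral>x. FF t x \<partial>lborel) = 1 / t * indicator {1..2::real} t * (\<integral>x. kk x \<partial>lborel)" for t
    proof (cases "t \<in> {1..2}")
      case False thus ?thesis by (simp add: FF_def)
    next
      case True
      hence t: "t > 0" by auto
      have "(\<integral>x. FF t x \<partial>lborel) = t ^ (CARD('n) - 1) * (\<integral>x. kk (t *\<^sub>R x) \<partial>lborel)"
        using True by (simp add: FF_def)
      also have "\<dots> = t ^ (CARD('n) - 1) / t ^ CARD('n) * (\<integral>x. kk x \<partial>lborel)"
        using int_kk_scale[OF t] by simp
      also have "t ^ (CARD('n) - 1) / t ^ CARD('n) = 1 / t"
      proof -
        have "CARD('n) = Suc (CARD('n) - 1)" using N3 by simp
        hence "t ^ CARD('n) = t * t ^ (CARD('n) - 1)" by (metis power_Suc)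
        thus ?thesis using t by simp
      qed
      finally show ?thesis using True by simp
    qed
    show ?thesis by (simp only: eq integral_mult_left_zero)
  qed
  have "ln 2 * (\<integral>x. kk x \<partial>lborel) = 0" using Fub L R ln2_int by simp
  thus ?thesis by simp
qed

lemma main_ineq: "(\<integral>x. G1 x \<partial>lborel) + (real CARD('n) - 1) / 4 * (\<integral>x. G2 x \<partial>lborel)
   \<ge> 1 / 4 * (\<integral>x. G3 x \<partial>lborel) + (real CARD('n) - 1) * (real CARD('n) - 3) / 4 * (\<integral>x. G4 x \<partial>lborel)"
proof -
  have iD: "integrable lborel DD" unfolding DD_def[abs_def]
    using int_G1 int_G2 int_G3 int_G4 by simp
  have eqD: "(\<integral>x. DD x \<partial>lborel) = (\<integral>x. G1 x \<partial>lborel) + (real CARD('n) - 1) / 4 * (\<integral>x. G2 x \<partial>lborel)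
     - (1 / 4 * (\<integral>x. G3 x \<partial>lborel) + (real CARD('n) - 1) * (real CARD('n) - 3) / 4 * (\<integral>x. G4 x \<partial>lborel))"
    unfolding DD_def[abs_def] using int_G1 int_G2 int_G3 int_G4 by simp
  have "(\<integral>x. kk x \<partial>lborel) \<le> (\<integral>x. DD x \<partial>lborel)"
  proof (rule integral_mono_AE[OF int_kk iD])
    show "AE x in lborel. kk x \<le> DD x"
      using AE_lborel_singleton[of 0] by eventually_elim (rule pointwise)
  qed
  thus ?thesis using eqD int_kk_zero by simp
qed

end


theorem proposition4p1:
  fixes \<psi> :: "real \<Rightarrow> real" and u :: "real ^ 'n \<Rightarrow> real"
  assumes N3: "CARD('n) \<ge> 3"
    and psi_smooth: "smooth_fun \<psi>"
    and psi_nonneg: "\<And>r. r \<ge> 0 \<Longrightarrow> \<psi> r \<ge> 0"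
    and psi_pos: "\<And>r. r > 0 \<Longrightarrow> \<psi> r > 0"
    and psi0: "\<psi> 0 = 0" and dpsi0: "deriv \<psi> 0 = 1" and ddpsi0: "deriv (deriv \<psi>) 0 = 0"
    and u: "test_fun u"
  shows "model_integral \<psi> (model_grad_sq \<psi> u)
         + (real CARD('n) - 1) / 4 *
           model_integral \<psi> (\<lambda>x. (2 * K_rad \<psi> (norm x) + (real CARD('n) - 3) * H_tan \<psi> (norm x)) * (u x)\<^sup>2)
       \<ge> 1 / 4 * model_integral \<psi> (\<lambda>x. (u x)\<^sup>2 / (norm x)\<^sup>2)
         + (real CARD('n) - 1) * (real CARD('n) - 3) / 4 *
           model_integral \<psi> (\<lambda>x. (u x)\<^sup>2 / (\<psi> (norm x))\<^sup>2)"
proof -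
  interpret H: hardy \<psi> u
    by unfold_locales (use N3 psi_smooth psi_pos psi0 dpsi0 u in auto)
  obtain R where R: "R > 0" and supp: "\<And>y. norm y \<ge> R \<Longrightarrow> u y = 0 \<and> eucl_grad u y = 0"
    using H.support_exists by blast
  obtain M1 where M1: "\<And>y. norm (u y) \<le> M1"
    using H.bound_compact_supp[OF H.uD(4), of R] supp by blast
  obtain M2 where M2: "\<And>y. norm (eucl_grad u y) \<le> M2"
    using H.bound_compact_supp[OF H.cont_grad, of R] supp by blast
  obtain c C where c: "c > 0" and psib: "\<And>s. 0 < s \<Longrightarrow> s \<le> R \<Longrightarrow>
     c * s \<le> \<psi> s \<and> \<psi> s \<le> C * s \<and> \<bar>deriv \<psi> s\<bar> \<le> C \<and> \<bar>deriv (deriv \<psi>) s\<bar> \<le> C"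
    using H.psi_bounds_exist[OF R] by blast
  interpret H2: hardy2 \<psi> u R c C "max M1 M2"
  proof unfold_locales
    fix y :: "real^'n"
    show "\<bar>u y\<bar> \<le> max M1 M2 \<and> norm (eucl_grad u y) \<le> max M1 M2"
      using M1[of y] M2[of y] by auto
  qed (use R supp c psib in auto)
  show ?thesis
    using H2.main_ineq unfolding H2.G1_def H2.G2_def H2.G3_def H2.G4_def model_integral_def .
qed


end
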